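(* Let $A\in\mathbb{R}^{n\times n}$ be nonsingular with $A\geq 0$ and $A^{-1}\geq 0$, and let $(U_k^{(i)},V_k^{(i)},E_k)_{k=1}^{p}$, $i=1,2$, be two weak regular multisplittings of $A$ (with the same weighting matrices $E_k$). If $[U_k^{(1)}]^{-1}\geq[U_k^{(2)}]^{-1}$ for each $k=1,\ldots,p$, then $\rho(H_1)\leq\rho(H_2)<1$, where $H_i=\sum_{k=1}^{p}E_k[U_k^{(i)}]^{-1}V_k^{(i)}$ for $i=1,2$.
   Context: Inequalities are entrywise; $\rho(\cdot)$ is the spectral radius. A splitting $A=U-V$ of $A\in\mathbb{R}^{n\times n}$ is weak regular if $U$ is nonsingular, $U^{-1}\geq 0$ and $U^{-1}V\geq 0$. A weak regular multisplitting of $A$ is a triplet $(U_k,V_k,E_k)_{k=1}^{p}$ where each $A=U_k-V_k$ is a weak regular splitting and each $E_k\geq 0$ is an $n\times n$ diagonal matrix with $\sum_{k=1}^{p}E_k=I$. *)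

theory Defs
  imports "Jordan_Normal_Form.Spectral_Radius"
begin

definition msum :: "nat \<Rightarrow> nat \<Rightarrow> (nat \<Rightarrow> real mat) \<Rightarrow> real mat" where
  "msum n p f = mat n n (\<lambda>ij. \<Sum>k<p. f k $$ ij)"

text \<open>The (two-sided) inverse of a square matrix (only meaningful if it is invertible).\<close>
definition inv_mat :: "real mat \<Rightarrow> real mat" where
  "inv_mat U = (SOME B. B \<in> carrier_mat (dim_row U) (dim_row U) \<and>
                        U * B = 1\<^sub>m (dim_row U) \<and> B * U = 1\<^sub>m (dim_row U))"

definition rho :: "real mat \<Rightarrow> real" where
  "rho M = spectral_radius (map_mat complex_of_real M)"

definition weak_regular_splitting :: "nat \<Rightarrow> real mat \<Rightarrow> real mat \<Rightarrow> real mat \<Rightarrow> bool" where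
  "weak_regular_splitting n A U V \<longleftrightarrow>
     A \<in> carrier_mat n n \<and> U \<in> carrier_mat n n \<and> V \<in> carrier_mat n n \<and>
     A = U - V \<and> invertible_mat U \<and>
     inv_mat U \<ge> 0\<^sub>m n n \<and> inv_mat U * V \<ge> 0\<^sub>m n n"

definition weak_regular_multisplitting ::
  "nat \<Rightarrow> real mat \<Rightarrow> nat \<Rightarrow> (nat \<Rightarrow> real mat) \<Rightarrow> (nat \<Rightarrow> real mat) \<Rightarrow> (nat \<Rightarrow> real mat) \<Rightarrow> bool" where
  "weak_regular_multisplitting n A p U V E \<longleftrightarrow>
     (\<forall>k<p. weak_regular_splitting n A (U k) (V k) \<and>
            E k \<in> carrier_mat n n \<and> diagonal_mat (E k) \<and> E k \<ge> 0\<^sub>m n n) \<and>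
     msum n p E = 1\<^sub>m n"

definition iter_mat :: "nat \<Rightarrow> nat \<Rightarrow> (nat \<Rightarrow> real mat) \<Rightarrow> (nat \<Rightarrow> real mat) \<Rightarrow> (nat \<Rightarrow> real mat) \<Rightarrow> real mat" where
  "iter_mat n p U V E = msum n p (\<lambda>k. E k * inv_mat (U k) * V k)"

end

theory Submission
  imports Defs
begin
lemma mult_entry:
  assumes "X \<in> carrier_mat n m" "Y \<in> carrier_mat m q" "i < n" "j < q"
  shows "(X * Y) $$ (i,j) = (\<Sum>l<m. X $$ (i,l) * Y $$ (l,j))"
  using assms by (simp add: scalar_prod_def lessThan_atLeast0)

lemma mult_vec_entry:
  assumes "X \<in> carrier_mat n m" "v \<in> carrier_vec m" "i < n"
  shows "(X *\<^sub>v v) $ i = (\<Sum>l<m. X $$ (i,l) * v $ l)"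
  using assms by (simp add: scalar_prod_def lessThan_atLeast0)

lemma inv_mat_props:
  assumes U: "U \<in> carrier_mat n n" and inv: "invertible_mat U"
  shows "inv_mat U \<in> carrier_mat n n" "U * inv_mat U = 1\<^sub>m n" "inv_mat U * U = 1\<^sub>m n"
proof -
  from inv obtain B where B1: "U * B = 1\<^sub>m n" and B2: "B * U = 1\<^sub>m (dim_row B)"
    using U unfolding invertible_mat_def inverts_mat_def by auto
  have "dim_col B = n" using arg_cong[OF B1, of dim_col] by simp
  moreover have "dim_row B = n" using arg_cong[OF B2, of dim_col] U by simp
  ultimately have "B \<in> carrier_mat n n" by auto
  hence ex: "\<exists>B. B \<in> carrier_mat (dim_row U) (dim_row U) \<and> U * B = 1\<^sub>m (dim_row U) \<and> B * U = 1\<^sub>m (dim_row U)"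
    using B1 B2 U by auto
  have "inv_mat U \<in> carrier_mat (dim_row U) (dim_row U) \<and> U * inv_mat U = 1\<^sub>m (dim_row U) \<and> inv_mat U * U = 1\<^sub>m (dim_row U)"
    unfolding inv_mat_def by (rule someI_ex[OF ex])
  thus "inv_mat U \<in> carrier_mat n n" "U * inv_mat U = 1\<^sub>m n" "inv_mat U * U = 1\<^sub>m n"
    using U by auto
qed

lemma diag_mult_entry:
  assumes E: "E \<in> carrier_mat n n" and d: "diagonal_mat E" and X: "X \<in> carrier_mat n n"
    and i: "i < n" and j: "j < n"
  shows "(E * X) $$ (i,j) = E $$ (i,i) * X $$ (i,j)"
proof -
  have "(E * X) $$ (i,j) = (\<Sum>l<n. E $$ (i,l) * X $$ (l,j))" by (rule mult_entry[OF E X i j])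
  also have "\<dots> = (\<Sum>l<n. if l = i then E $$ (i,i) * X $$ (i,j) else 0)"
    using d E i by (intro sum.cong) (auto simp: diagonal_mat_def)
  also have "\<dots> = E $$ (i,i) * X $$ (i,j)" using i by simp
  finally show ?thesis .
qed



lemma split_facts:
  assumes wrm: "weak_regular_multisplitting n A p U V E" and A: "A \<in> carrier_mat n n"
    and i: "i < n" and j: "j < n"
  shows "iter_mat n p U V E $$ (i,j) = (if i = j then 1 else 0)
           - (\<Sum>l<n. (\<Sum>k<p. E k $$ (i,i) * inv_mat (U k) $$ (i,l)) * A $$ (l,j))"
    "iter_mat n p U V E $$ (i,j) \<ge> 0"
proof -
  let ?W = "\<lambda>k. inv_mat (U k)"
  let ?d = "(if i = j then 1 else 0) :: real"
  have sp: "\<And>k. k < p \<Longrightarrow> weak_regular_splitting n A (U k) (V k) \<and>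
            E k \<in> carrier_mat n n \<and> diagonal_mat (E k) \<and> E k \<ge> 0\<^sub>m n n"
    using wrm unfolding weak_regular_multisplitting_def by auto
  have Es: "msum n p E = 1\<^sub>m n" using wrm unfolding weak_regular_multisplitting_def by auto
  have esum: "(\<Sum>k<p. E k $$ (i,i)) = 1"
    using arg_cong[OF Es, of "\<lambda>M. M $$ (i,i)"] i by (simp add: msum_def)
  have tm: "(E k * ?W k * V k) $$ (i,j) = E k $$ (i,i) * (?d - (\<Sum>l<n. ?W k $$ (i,l) * A $$ (l,j)))
      \<and> (E k * ?W k * V k) $$ (i,j) \<ge> 0" if k: "k < p" for k
  proof -
    from sp[OF k] have U: "U k \<in> carrier_mat n n" and V: "V k \<in> carrier_mat n n"
      and AUV: "A = U k - V k" and iU: "invertible_mat (U k)" and W0: "inv_mat (U k) \<ge> 0\<^sub>m n n"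
      and WV0: "inv_mat (U k) * V k \<ge> 0\<^sub>m n n"
      and E: "E k \<in> carrier_mat n n" and Ed: "diagonal_mat (E k)" and E0: "E k \<ge> 0\<^sub>m n n"
      unfolding weak_regular_splitting_def by auto
    note Wp = inv_mat_props[OF U iU]
    have eq1: "E k * ?W k * V k = E k * (?W k * V k)"
      by (rule assoc_mult_mat[OF E Wp(1) V])
    have e1: "(E k * ?W k * V k) $$ (i,j) = E k $$ (i,i) * (?W k * V k) $$ (i,j)"
      unfolding eq1 by (rule diag_mult_entry[OF E Ed _ i j]) (use Wp(1) V in auto)
    have "(?W k * V k) $$ (i,j) = (\<Sum>l<n. ?W k $$ (i,l) * V k $$ (l,j))"
      by (rule mult_entry[OF Wp(1) V i j])
    also have "\<dots> = (\<Sum>l<n. ?W k $$ (i,l) * U k $$ (l,j) - ?W k $$ (i,l) * A $$ (l,j))"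
    proof (rule sum.cong[OF refl])
      fix l assume "l \<in> {..<n}"
      hence "A $$ (l,j) = U k $$ (l,j) - V k $$ (l,j)" using AUV U V j by auto
      hence "V k $$ (l,j) = U k $$ (l,j) - A $$ (l,j)" by simp
      thus "?W k $$ (i,l) * V k $$ (l,j) = ?W k $$ (i,l) * U k $$ (l,j) - ?W k $$ (i,l) * A $$ (l,j)"
        by (simp add: right_diff_distrib)
    qed
    also have "\<dots> = (?W k * U k) $$ (i,j) - (\<Sum>l<n. ?W k $$ (i,l) * A $$ (l,j))"
      by (simp add: sum_subtractf mult_entry[OF Wp(1) U i j])
    also have "(?W k * U k) $$ (i,j) = ?d" using Wp(3) i j by simp
    finally have e2: "(?W k * V k) $$ (i,j) = ?d - (\<Sum>l<n. ?W k $$ (i,l) * A $$ (l,j))" .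
    have "E k $$ (i,i) \<ge> 0" using E0 i unfolding less_eq_mat_def by auto
    moreover have "(?W k * V k) $$ (i,j) \<ge> 0" using WV0 i j unfolding less_eq_mat_def by auto
    ultimately show ?thesis using e1 e2 by simp
  qed
  have H: "iter_mat n p U V E $$ (i,j) = (\<Sum>k<p. (E k * ?W k * V k) $$ (i,j))"
    unfolding iter_mat_def msum_def using i j by simp
  show "iter_mat n p U V E $$ (i,j) \<ge> 0" unfolding H
  proof (intro sum_nonneg)
    fix k assume "k \<in> {..<p}"
    hence "k < p" by simp
    from tm[OF this] show "0 \<le> (E k * inv_mat (U k) * V k) $$ (i,j)" by blast
  qed
  have "iter_mat n p U V E $$ (i,j) = (\<Sum>k<p. E k $$ (i,i) * (?d - (\<Sum>l<n. ?W k $$ (i,l) * A $$ (l,j))))"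
    unfolding H using tm by (intro sum.cong) auto
  also have "\<dots> = ?d * (\<Sum>k<p. E k $$ (i,i)) - (\<Sum>k<p. \<Sum>l<n. E k $$ (i,i) * ?W k $$ (i,l) * A $$ (l,j))"
    by (simp add: algebra_simps sum_subtractf sum_distrib_left sum_distrib_right)
  also have "(\<Sum>k<p. \<Sum>l<n. E k $$ (i,i) * ?W k $$ (i,l) * A $$ (l,j))
      = (\<Sum>l<n. (\<Sum>k<p. E k $$ (i,i) * ?W k $$ (i,l)) * A $$ (l,j))"
    by (subst sum.swap) (simp add: sum_distrib_right)
  finally show "iter_mat n p U V E $$ (i,j) = ?d
           - (\<Sum>l<n. (\<Sum>k<p. E k $$ (i,i) * inv_mat (U k) $$ (i,l)) * A $$ (l,j))"
    using esum by simp
qed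



lemma eig_ineq:
  fixes H :: "real mat"
  assumes H: "H \<in> carrier_mat n n" and H0: "\<And>i j. i < n \<Longrightarrow> j < n \<Longrightarrow> H $$ (i,j) \<ge> 0"
    and v: "v \<in> carrier_vec n" and ev: "map_mat complex_of_real H *\<^sub>v v = lam \<cdot>\<^sub>v v"
    and i: "i < n"
  shows "norm lam * norm (v $ i) \<le> (\<Sum>j<n. H $$ (i,j) * norm (v $ j))"
proof -
  have Hc: "map_mat complex_of_real H \<in> carrier_mat n n" using H by simp
  have "lam * v $ i = (map_mat complex_of_real H *\<^sub>v v) $ i" using ev v i by simp
  also have "\<dots> = (\<Sum>j<n. map_mat complex_of_real H $$ (i,j) * v $ j)"
    by (rule mult_vec_entry[OF Hc v i])
  also have "\<dots> = (\<Sum>j<n. of_real (H $$ (i,j)) * v $ j)"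
    using H i by (intro sum.cong) auto
  finally have eq: "lam * v $ i = (\<Sum>j<n. of_real (H $$ (i,j)) * v $ j)" .
  have "norm lam * norm (v $ i) = norm (\<Sum>j<n. of_real (H $$ (i,j)) * v $ j)"
    unfolding eq[symmetric] by (simp add: norm_mult)
  also have "\<dots> \<le> (\<Sum>j<n. norm (of_real (H $$ (i,j)) * v $ j))" by (rule norm_sum)
  also have "\<dots> = (\<Sum>j<n. H $$ (i,j) * norm (v $ j))"
    using H0 i by (intro sum.cong) (auto simp: norm_mult)
  finally show ?thesis .
qed

lemma nonzero_entry:
  assumes "v \<in> carrier_vec n" "v \<noteq> 0\<^sub>v n"
  shows "\<exists>i<n. v $ i \<noteq> 0"
proof (rule ccontr)
  assume "\<not> ?thesis"
  hence "v = 0\<^sub>v n" using assms(1) by (intro eq_vecI) auto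
  thus False using assms(2) by simp
qed

lemma ev_bound:
  fixes C :: "real mat" and a :: "nat \<Rightarrow> real" and r :: real
  assumes C: "C \<in> carrier_mat n n" and n: "0 < n"
    and C0: "\<And>i j. i < n \<Longrightarrow> j < n \<Longrightarrow> C $$ (i,j) \<ge> 0"
    and a0: "\<And>i. i < n \<Longrightarrow> a i \<ge> 0" and i0: "i0 < n" and ai0: "a i0 > 0"
    and ra: "\<And>i. i < n \<Longrightarrow> r * a i \<le> (\<Sum>j<n. C $$ (i,j) * a j)"
  shows "r \<le> rho C"
proof (rule ccontr)
  assume "\<not> r \<le> rho C" hence lt: "rho C < r" by simp
  let ?Cc = "map_mat complex_of_real C"
  have Cc: "?Cc \<in> carrier_mat n n" using C by simp
  have rho0: "rho C \<ge> 0" using spectral_radius_mem_max(1)[OF Cc n] unfolding rho_def by auto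
  define mu where "mu = (rho C + r)/2"
  have mu: "0 < mu" "rho C < mu" "mu < r" using lt rho0 unfolding mu_def by auto
  define R where "R = (1/mu) \<cdot>\<^sub>m C"
  have R: "R \<in> carrier_mat n n" using C by (simp add: R_def)
  have Rij: "\<And>i j. i < n \<Longrightarrow> j < n \<Longrightarrow> R $$ (i,j) = C $$ (i,j) / mu"
    using C by (simp add: R_def)
  have R0: "\<And>i j. i < n \<Longrightarrow> j < n \<Longrightarrow> R $$ (i,j) \<ge> 0" using C0 mu Rij by simp
  let ?D = "map_mat complex_of_real R"
  have D: "?D \<in> carrier_mat n n" using R by simp
  have srD: "spectral_radius ?D < 1"
  proof -
    from spectral_radius_mem_max(1)[OF D n] obtain z where z: "z \<in> spectrum ?D"
      and sz: "spectral_radius ?D = norm z" by auto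
    from z obtain v where ev: "eigenvector ?D v z" unfolding spectrum_def eigenvalue_def by auto
    hence v: "v \<in> carrier_vec n" "v \<noteq> 0\<^sub>v n" "?D *\<^sub>v v = z \<cdot>\<^sub>v v"
      using D unfolding eigenvector_def by auto
    have Cv: "?Cc *\<^sub>v v = (of_real mu * z) \<cdot>\<^sub>v v"
    proof (rule eq_vecI)
      fix i assume "i < dim_vec ((of_real mu * z) \<cdot>\<^sub>v v)"
      hence i: "i < n" using v by simp
      have "(?Cc *\<^sub>v v) $ i = (\<Sum>l<n. ?Cc $$ (i,l) * v $ l)" by (rule mult_vec_entry[OF Cc v(1) i])
      also have "\<dots> = (\<Sum>l<n. of_real mu * (?D $$ (i,l) * v $ l))"
        using C R i mu Rij by (intro sum.cong) auto
      also have "\<dots> = of_real mu * (\<Sum>l<n. ?D $$ (i,l) * v $ l)" by (simp add: sum_distrib_left)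
      also have "(\<Sum>l<n. ?D $$ (i,l) * v $ l) = (?D *\<^sub>v v) $ i"
        by (rule mult_vec_entry[OF D v(1) i, symmetric])
      also have "\<dots> = z * v $ i" using v i by simp
      finally show "(?Cc *\<^sub>v v) $ i = ((of_real mu * z) \<cdot>\<^sub>v v) $ i" using i v by simp
    qed (use v C in auto)
    have "eigenvector ?Cc v (of_real mu * z)" unfolding eigenvector_def using v Cv C by auto
    hence "of_real mu * z \<in> spectrum ?Cc" unfolding spectrum_def eigenvalue_def by auto
    hence "norm (of_real mu * z) \<le> rho C"
      using spectral_radius_mem_max(2)[OF Cc n] unfolding rho_def by auto
    hence "mu * norm z \<le> rho C" using mu by (simp add: norm_mult)
    hence "mu * norm z < mu * 1" using mu by linarith
    hence "norm z < 1" using mu by (simp only: mult_less_cancel_left_pos)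
    thus ?thesis using sz by simp
  qed
  from spectral_radius_jnf_norm_bound_less_1_upper_triangular[OF D srD]
  obtain c where c: "\<And>k. norm_bound (?D ^\<^sub>m k) c" by auto
  have Dpow: "?D ^\<^sub>m k = map_mat complex_of_real (R ^\<^sub>m k)" for k
    by (rule of_real_hom.mat_hom_pow[OF R, symmetric])
  have Rk: "(R ^\<^sub>m k) $$ (i,j) \<le> c" if ij: "i < n" "j < n" for i j k
  proof -
    have Rkc: "R ^\<^sub>m k \<in> carrier_mat n n" using R by simp
    have Dk: "?D ^\<^sub>m k \<in> carrier_mat n n" using pow_carrier_mat[OF D] by blast
    hence dims: "i < dim_row (?D ^\<^sub>m k)" "j < dim_col (?D ^\<^sub>m k)" using ij by auto
    have "norm ((?D ^\<^sub>m k) $$ (i,j)) \<le> c" using c[of k] dims unfolding norm_bound_def by blast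
    moreover have "(?D ^\<^sub>m k) $$ (i,j) = of_real ((R ^\<^sub>m k) $$ (i,j))"
    proof -
      have "dim_row (R ^\<^sub>m k) = n" "dim_col (R ^\<^sub>m k) = n" using Rkc by auto
      thus ?thesis unfolding Dpow using ij by (simp add: index_map_mat)
    qed
    ultimately show ?thesis by simp
  qed
  have Rk0: "\<forall>i<n. \<forall>j<n. (R ^\<^sub>m k) $$ (i,j) \<ge> 0" for k
  proof (induction k)
    case 0 thus ?case using R by auto
  next
    case (Suc k)
    show ?case
    proof (intro allI impI)
      fix i j assume ij: "i < n" "j < n"
      have "(R ^\<^sub>m Suc k) $$ (i,j) = (\<Sum>l<n. (R ^\<^sub>m k) $$ (i,l) * R $$ (l,j))"
        using mult_entry[OF pow_carrier_mat[OF R] R ij] by simp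
      also have "\<dots> \<ge> 0" using Suc R0 ij by (intro sum_nonneg mult_nonneg_nonneg) auto
      finally show "(R ^\<^sub>m Suc k) $$ (i,j) \<ge> 0" .
    qed
  qed
  define q where "q = r / mu"
  have q1: "q > 1" using mu unfolding q_def by simp
  have q0: "q \<ge> 0" using q1 by simp
  have Ra: "q * a l \<le> (\<Sum>j<n. R $$ (l,j) * a j)" if l: "l < n" for l
  proof -
    have "(\<Sum>j<n. R $$ (l,j) * a j) = (1/mu) * (\<Sum>j<n. C $$ (l,j) * a j)"
      using Rij l by (simp add: sum_distrib_left)
    moreover have "(1/mu) * (r * a l) \<le> (1/mu) * (\<Sum>j<n. C $$ (l,j) * a j)"
      using ra[OF l] mu by (intro mult_left_mono) auto
    ultimately show ?thesis unfolding q_def by simp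
  qed
  have iter: "\<forall>i<n. q^k * a i \<le> (\<Sum>j<n. (R ^\<^sub>m k) $$ (i,j) * a j)" for k
  proof (induction k)
    case 0
    show ?case
    proof (intro allI impI)
      fix i assume i: "i < n"
      have "(\<Sum>j<n. (R ^\<^sub>m 0) $$ (i,j) * a j) = (\<Sum>j<n. if j = i then a i else 0)"
        using R i by (intro sum.cong) auto
      also have "\<dots> = a i" using i by simp
      finally show "q^0 * a i \<le> (\<Sum>j<n. (R ^\<^sub>m 0) $$ (i,j) * a j)" by simp
    qed
  next
    case (Suc k)
    show ?case
    proof (intro allI impI)
      fix i assume i: "i < n"
      have "(\<Sum>j<n. (R ^\<^sub>m Suc k) $$ (i,j) * a j)
          = (\<Sum>j<n. (\<Sum>l<n. (R ^\<^sub>m k) $$ (i,l) * R $$ (l,j)) * a j)"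
        using mult_entry[OF pow_carrier_mat[OF R] R i] by (intro sum.cong) auto
      also have "\<dots> = (\<Sum>l<n. (R ^\<^sub>m k) $$ (i,l) * (\<Sum>j<n. R $$ (l,j) * a j))"
        by (simp add: sum_distrib_left sum_distrib_right mult.assoc) (rule sum.swap)
      also have "\<dots> \<ge> (\<Sum>l<n. (R ^\<^sub>m k) $$ (i,l) * (q * a l))"
        using Rk0 Ra i by (intro sum_mono mult_left_mono) auto
      finally have "(\<Sum>j<n. (R ^\<^sub>m Suc k) $$ (i,j) * a j) \<ge> q * (\<Sum>l<n. (R ^\<^sub>m k) $$ (i,l) * a l)"
        by (simp add: sum_distrib_left mult.left_commute)
      moreover have "q * (q^k * a i) \<le> q * (\<Sum>l<n. (R ^\<^sub>m k) $$ (i,l) * a l)"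
        using Suc i q0 by (intro mult_left_mono) auto
      ultimately show "q ^ Suc k * a i \<le> (\<Sum>j<n. (R ^\<^sub>m Suc k) $$ (i,j) * a j)" by simp
    qed
  qed
  define S where "S = (\<Sum>j<n. c * a j)"
  obtain k where k: "S / a i0 < q ^ k" using real_arch_pow[OF q1] by blast
  have "S < q ^ k * a i0" using k ai0 by (simp add: divide_less_eq)
  also have "\<dots> \<le> (\<Sum>j<n. (R ^\<^sub>m k) $$ (i0,j) * a j)" using iter i0 by auto
  also have "\<dots> \<le> S" unfolding S_def using Rk i0 a0 by (intro sum_mono mult_right_mono) auto
  finally show False by simp
qed



lemma wrm_facts:
  assumes wrm: "weak_regular_multisplitting n A p U V E" and k: "k < p"
  shows "E k \<in> carrier_mat n n" "diagonal_mat (E k)"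
    "\<And>i j. i < n \<Longrightarrow> j < n \<Longrightarrow> E k $$ (i,j) \<ge> 0"
    "U k \<in> carrier_mat n n" "invertible_mat (U k)"
    "\<And>i j. i < n \<Longrightarrow> j < n \<Longrightarrow> inv_mat (U k) $$ (i,j) \<ge> 0"
    "inv_mat (U k) \<in> carrier_mat n n" "inv_mat (U k) * U k = 1\<^sub>m n"
proof -
  have sp: "weak_regular_splitting n A (U k) (V k) \<and>
            E k \<in> carrier_mat n n \<and> diagonal_mat (E k) \<and> E k \<ge> 0\<^sub>m n n"
    using wrm k unfolding weak_regular_multisplitting_def by blast
  hence ws: "weak_regular_splitting n A (U k) (V k)" and E0: "E k \<ge> 0\<^sub>m n n" by blast+
  from sp show E: "E k \<in> carrier_mat n n" "diagonal_mat (E k)" by blast+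
  show "\<And>i j. i < n \<Longrightarrow> j < n \<Longrightarrow> E k $$ (i,j) \<ge> 0"
  proof -
    fix i j assume ij: "i < n" "j < n"
    have "0\<^sub>m n n $$ (i,j) \<le> E k $$ (i,j)" using E0 E ij unfolding less_eq_mat_def by auto
    thus "E k $$ (i,j) \<ge> 0" using ij by simp
  qed
  from ws show U: "U k \<in> carrier_mat n n" "invertible_mat (U k)"
    unfolding weak_regular_splitting_def by blast+
  from ws have W0: "inv_mat (U k) \<ge> 0\<^sub>m n n" unfolding weak_regular_splitting_def by blast
  note Wp = inv_mat_props[OF U]
  show "\<And>i j. i < n \<Longrightarrow> j < n \<Longrightarrow> inv_mat (U k) $$ (i,j) \<ge> 0"
  proof -
    fix i j assume ij: "i < n" "j < n"
    have "0\<^sub>m n n $$ (i,j) \<le> inv_mat (U k) $$ (i,j)" using W0 Wp(1) ij unfolding less_eq_mat_def by auto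
    thus "inv_mat (U k) $$ (i,j) \<ge> 0" using ij by simp
  qed
  show "inv_mat (U k) \<in> carrier_mat n n" "inv_mat (U k) * U k = 1\<^sub>m n"
    using Wp by auto
qed

lemma esum_one:
  assumes wrm: "weak_regular_multisplitting n A p U V E" and i: "i < n"
  shows "(\<Sum>k<p. E k $$ (i,i)) = 1"
proof -
  have Es: "msum n p E = 1\<^sub>m n" using wrm unfolding weak_regular_multisplitting_def by auto
  show ?thesis using arg_cong[OF Es, of "\<lambda>M. M $$ (i,i)"] i by (simp add: msum_def)
qed

lemma rho_lt_1:
  assumes n: "0 < n" and A: "A \<in> carrier_mat n n" and iA: "invertible_mat A"
    and A0: "A \<ge> 0\<^sub>m n n"
    and wrm: "weak_regular_multisplitting n A p U V E"
  shows "rho (iter_mat n p U V E) < 1"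
proof (rule ccontr)
  let ?H = "iter_mat n p U V E"
  assume "\<not> ?thesis" hence ge: "rho ?H \<ge> 1" by simp
  have H: "?H \<in> carrier_mat n n" by (simp add: iter_mat_def msum_def)
  let ?Hc = "map_mat complex_of_real ?H"
  have Hc: "?Hc \<in> carrier_mat n n" using H by simp
  from spectral_radius_mem_max(1)[OF Hc n] obtain lam where lam: "lam \<in> spectrum ?Hc"
    and sr: "rho ?H = norm lam" unfolding rho_def by auto
  have ev: "eigenvalue ?Hc lam" using lam unfolding spectrum_def by auto
  have HTc: "transpose_mat ?Hc \<in> carrier_mat n n" using Hc by simp
  have "eigenvalue (transpose_mat ?Hc) lam"
    unfolding eigenvalue_root_char_poly[OF HTc] char_poly_transpose_mat[OF Hc]
    using ev unfolding eigenvalue_root_char_poly[OF Hc] .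
  then obtain w where "eigenvector (transpose_mat ?Hc) w lam" unfolding eigenvalue_def by auto
  hence w0: "w \<in> carrier_vec n" "w \<noteq> 0\<^sub>v n" "transpose_mat ?Hc *\<^sub>v w = lam \<cdot>\<^sub>v w"
    using HTc unfolding eigenvector_def by auto
  have tr: "transpose_mat ?Hc = map_mat complex_of_real (transpose_mat ?H)" by (rule map_mat_transpose)
  have w: "w \<in> carrier_vec n" "w \<noteq> 0\<^sub>v n" "map_mat complex_of_real (transpose_mat ?H) *\<^sub>v w = lam \<cdot>\<^sub>v w"
    using w0 unfolding tr by auto
  define a where "a j = norm (w $ j)" for j
  have a0: "a j \<ge> 0" for j unfolding a_def by simp
  have HT: "transpose_mat ?H \<in> carrier_mat n n" using H by simp
  have HT0: "transpose_mat ?H $$ (i,j) \<ge> 0" if "i < n" "j < n" for i j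
    using split_facts(2)[OF wrm A that(2) that(1)] that H by simp
  have ineq: "norm lam * a j \<le> (\<Sum>i<n. ?H $$ (i,j) * a i)" if j: "j < n" for j
  proof -
    have "norm lam * a j \<le> (\<Sum>i<n. transpose_mat ?H $$ (j,i) * a i)"
      using eig_ineq[OF HT HT0 w(1) w(3) j] unfolding a_def by simp
    also have "\<dots> = (\<Sum>i<n. ?H $$ (i,j) * a i)" using H j by (intro sum.cong) auto
    finally show ?thesis .
  qed
  define M where "M i l = (\<Sum>k<p. E k $$ (i,i) * inv_mat (U k) $$ (i,l))" for i l
  define b where "b l = (\<Sum>i<n. a i * M i l)" for l
  note wf = wrm_facts[OF wrm]
  have M0: "M i l \<ge> 0" if "i < n" "l < n" for i l
    unfolding M_def using wf(3) wf(6) that by (intro sum_nonneg mult_nonneg_nonneg) auto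
  have b0: "b l \<ge> 0" if "l < n" for l
    unfolding b_def using M0 a0 that by (intro sum_nonneg mult_nonneg_nonneg) auto
  have Hrow: "(\<Sum>i<n. ?H $$ (i,j) * a i) = a j - (\<Sum>l<n. b l * A $$ (l,j))" if j: "j < n" for j
  proof -
    have "(\<Sum>i<n. ?H $$ (i,j) * a i)
        = (\<Sum>i<n. ((if i = j then 1 else 0) - (\<Sum>l<n. M i l * A $$ (l,j))) * a i)"
      using split_facts(1)[OF wrm A _ j] unfolding M_def by (intro sum.cong) auto
    also have "\<dots> = (\<Sum>i<n. (if i = j then a i else 0) - (\<Sum>l<n. a i * M i l * A $$ (l,j)))"
    proof (rule sum.cong[OF refl])
      fix i
      have "(\<Sum>l<n. M i l * A $$ (l,j)) * a i = (\<Sum>l<n. a i * M i l * A $$ (l,j))"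
        unfolding sum_distrib_right by (intro sum.cong) (auto simp: mult_ac)
      thus "((if i = j then 1 else 0) - (\<Sum>l<n. M i l * A $$ (l,j))) * a i
          = (if i = j then a i else 0) - (\<Sum>l<n. a i * M i l * A $$ (l,j))"
        unfolding left_diff_distrib by simp
    qed
    also have "\<dots> = (\<Sum>i<n. (if i = j then a i else 0)) - (\<Sum>i<n. \<Sum>l<n. a i * M i l * A $$ (l,j))"
      by (rule sum_subtractf)
    also have "(\<Sum>i<n. (if i = j then a i else 0)) = a j" using j by simp
    also have "(\<Sum>i<n. \<Sum>l<n. a i * M i l * A $$ (l,j)) = (\<Sum>l<n. b l * A $$ (l,j))"
      unfolding b_def by (subst sum.swap) (simp add: sum_distrib_right)
    finally show ?thesis .
  qed
  have bA: "(\<Sum>l<n. b l * A $$ (l,j)) = 0" if j: "j < n" for j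
  proof -
    have "a j \<le> norm lam * a j" using ge sr a0[of j] by (simp add: mult_le_cancel_right1)
    also have "\<dots> \<le> a j - (\<Sum>l<n. b l * A $$ (l,j))" using ineq[OF j] Hrow[OF j] by simp
    finally have le: "(\<Sum>l<n. b l * A $$ (l,j)) \<le> 0" by simp
    have "(\<Sum>l<n. b l * A $$ (l,j)) \<ge> 0"
      using b0 A0 A j unfolding less_eq_mat_def by (intro sum_nonneg mult_nonneg_nonneg) auto
    with le show ?thesis by simp
  qed
  note Ai = inv_mat_props[OF A iA]
  have bz: "b m = 0" if m: "m < n" for m
  proof -
    have "(\<Sum>l<n. b l * (if l = m then 1 else 0)) = (\<Sum>l<n. if l = m then b l else 0)"
      by (rule sum.cong[OF refl]) simp
    hence "b m = (\<Sum>l<n. b l * (if l = m then 1 else 0))" using m by simp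
    also have "\<dots> = (\<Sum>l<n. b l * (A * inv_mat A) $$ (l,m))"
      using Ai(2) m by (intro sum.cong) auto
    also have "\<dots> = (\<Sum>l<n. \<Sum>j<n. b l * A $$ (l,j) * inv_mat A $$ (j,m))"
    proof (rule sum.cong[OF refl])
      fix l assume "l \<in> {..<n}" hence l: "l < n" by simp
      show "b l * (A * inv_mat A) $$ (l,m) = (\<Sum>j<n. b l * A $$ (l,j) * inv_mat A $$ (j,m))"
        unfolding mult_entry[OF A Ai(1) l m] sum_distrib_left by (simp add: mult.assoc)
    qed
    also have "\<dots> = (\<Sum>j<n. (\<Sum>l<n. b l * A $$ (l,j)) * inv_mat A $$ (j,m))"
      by (subst sum.swap) (simp add: sum_distrib_right)
    also have "\<dots> = 0" using bA by simp
    finally show ?thesis .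
  qed
  define G where "G k l = (\<Sum>i<n. (E k $$ (i,i) * a i) * inv_mat (U k) $$ (i,l))" for k l
  have G0: "G k l \<ge> 0" if "k < p" "l < n" for k l
    unfolding G_def using wf(3)[OF that(1)] wf(6)[OF that(1)] a0 that
    by (intro sum_nonneg mult_nonneg_nonneg) auto
  have bG: "b l = (\<Sum>k<p. G k l)" for l
    unfolding b_def M_def G_def sum_distrib_left
    by (subst sum.swap) ((rule sum.cong[OF refl])+, simp add: mult_ac)
  have Gz: "G k l = 0" if k: "k < p" and l: "l < n" for k l
  proof -
    have "(\<Sum>k<p. G k l) = 0" using bz[OF l] bG by simp
    moreover have "\<forall>k\<in>{..<p}. G k l \<ge> 0" using G0 l by auto
    ultimately have "\<forall>k\<in>{..<p}. G k l = 0" using sum_nonneg_eq_0_iff[of "{..<p}" "\<lambda>k. G k l"] by simp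
    thus ?thesis using k by simp
  qed
  have eka: "E k $$ (m,m) * a m = 0" if k: "k < p" and m: "m < n" for k m
  proof -
    have "E k $$ (m,m) * a m = (\<Sum>i<n. (E k $$ (i,i) * a i) * (if i = m then 1 else 0))"
    proof -
      have "(\<Sum>i<n. (E k $$ (i,i) * a i) * (if i = m then 1 else 0)) = (\<Sum>i<n. if i = m then E k $$ (i,i) * a i else 0)"
        by (rule sum.cong[OF refl]) simp
      thus ?thesis using m by simp
    qed
    also have "\<dots> = (\<Sum>i<n. (E k $$ (i,i) * a i) * (inv_mat (U k) * U k) $$ (i,m))"
      using wf(8)[OF k] m by (intro sum.cong) auto
    also have "\<dots> = (\<Sum>i<n. \<Sum>l<n. (E k $$ (i,i) * a i) * inv_mat (U k) $$ (i,l) * U k $$ (l,m))"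
    proof (rule sum.cong[OF refl])
      fix i assume "i \<in> {..<n}" hence i: "i < n" by simp
      show "(E k $$ (i,i) * a i) * (inv_mat (U k) * U k) $$ (i,m) = (\<Sum>l<n. (E k $$ (i,i) * a i) * inv_mat (U k) $$ (i,l) * U k $$ (l,m))"
        unfolding mult_entry[OF wf(7)[OF k] wf(4)[OF k] i m] sum_distrib_left by (simp add: mult.assoc)
    qed
    also have "\<dots> = (\<Sum>l<n. G k l * U k $$ (l,m))"
      unfolding G_def by (subst sum.swap) (simp add: sum_distrib_right)
    also have "\<dots> = 0" using Gz[OF k] by simp
    finally show ?thesis .
  qed
  have az: "a m = 0" if m: "m < n" for m
  proof -
    have "a m = (\<Sum>k<p. E k $$ (m,m)) * a m" using esum_one[OF wrm m] by simp
    also have "\<dots> = (\<Sum>k<p. E k $$ (m,m) * a m)" by (simp add: sum_distrib_right)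
    also have "\<dots> = 0" using eka m by (intro sum.neutral) auto
    finally show ?thesis .
  qed
  from nonzero_entry[OF w(1) w(2)] obtain m where "m < n" "w $ m \<noteq> 0" by auto
  with az[of m] show False unfolding a_def by simp
qed

theorem corollary5p14:
  fixes n p :: nat and A :: "real mat"
    and U1 V1 U2 V2 E :: "nat \<Rightarrow> real mat"
  assumes "n > 0"
    and "A \<in> carrier_mat n n"
    and "invertible_mat A"
    and "A \<ge> 0\<^sub>m n n"
    and "inv_mat A \<ge> 0\<^sub>m n n"
    and "weak_regular_multisplitting n A p U1 V1 E"
    and "weak_regular_multisplitting n A p U2 V2 E"
    and "\<forall>k<p. inv_mat (U1 k) \<ge> inv_mat (U2 k)"
  shows "rho (iter_mat n p U1 V1 E) \<le> rho (iter_mat n p U2 V2 E) \<and>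
         rho (iter_mat n p U2 V2 E) < 1"
proof
  note n = assms(1) and A = assms(2) and w1 = assms(6) and w2 = assms(7)
  show "rho (iter_mat n p U2 V2 E) < 1" by (rule rho_lt_1[OF n A assms(3) assms(4) w2])
  let ?H1 = "iter_mat n p U1 V1 E" and ?H2 = "iter_mat n p U2 V2 E"
  have H1: "?H1 \<in> carrier_mat n n" and H2: "?H2 \<in> carrier_mat n n" by (simp_all add: iter_mat_def msum_def)
  have H10: "\<And>i j. i < n \<Longrightarrow> j < n \<Longrightarrow> ?H1 $$ (i,j) \<ge> 0" using split_facts(2)[OF w1 A] by auto
  have H20: "\<And>i j. i < n \<Longrightarrow> j < n \<Longrightarrow> ?H2 $$ (i,j) \<ge> 0" using split_facts(2)[OF w2 A] by auto
  have le12: "?H1 $$ (i,j) \<le> ?H2 $$ (i,j)" if i: "i < n" and j: "j < n" for i j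
  proof -
    have M: "(\<Sum>k<p. E k $$ (i,i) * inv_mat (U2 k) $$ (i,l)) \<le> (\<Sum>k<p. E k $$ (i,i) * inv_mat (U1 k) $$ (i,l))"
      if l: "l < n" for l
    proof (rule sum_mono)
      fix k assume "k \<in> {..<p}" hence k: "k < p" by simp
      have c2: "inv_mat (U2 k) \<in> carrier_mat n n" using wrm_facts(7)[OF w2 k] .
      have "inv_mat (U2 k) $$ (i,l) \<le> inv_mat (U1 k) $$ (i,l)"
        using assms(8) k c2 i l unfolding less_eq_mat_def by auto
      thus "E k $$ (i,i) * inv_mat (U2 k) $$ (i,l) \<le> E k $$ (i,i) * inv_mat (U1 k) $$ (i,l)"
        using wrm_facts(3)[OF w1 k i i] by (rule mult_left_mono)
    qed
    have "(\<Sum>l<n. (\<Sum>k<p. E k $$ (i,i) * inv_mat (U2 k) $$ (i,l)) * A $$ (l,j))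
        \<le> (\<Sum>l<n. (\<Sum>k<p. E k $$ (i,i) * inv_mat (U1 k) $$ (i,l)) * A $$ (l,j))"
      using M assms(4) A j unfolding less_eq_mat_def by (intro sum_mono[OF mult_right_mono]) auto
    thus ?thesis unfolding split_facts(1)[OF w1 A i j] split_facts(1)[OF w2 A i j] by simp
  qed
  let ?Hc = "map_mat complex_of_real ?H1"
  have Hc: "?Hc \<in> carrier_mat n n" using H1 by simp
  from spectral_radius_mem_max(1)[OF Hc n] obtain lam where lam: "lam \<in> spectrum ?Hc"
    and sr: "rho ?H1 = norm lam" unfolding rho_def by auto
  from lam obtain v where "eigenvector ?Hc v lam" unfolding spectrum_def eigenvalue_def by auto
  hence v: "v \<in> carrier_vec n" "v \<noteq> 0\<^sub>v n" "?Hc *\<^sub>v v = lam \<cdot>\<^sub>v v"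
    using Hc unfolding eigenvector_def by auto
  from nonzero_entry[OF v(1) v(2)] obtain i0 where i0: "i0 < n" "v $ i0 \<noteq> 0" by auto
  have "norm lam \<le> rho ?H2"
  proof (rule ev_bound[OF H2 n H20, of "\<lambda>i. norm (v $ i)" i0])
    show "norm (v $ i0) > 0" using i0 by simp
    fix i assume i: "i < n"
    show "norm (v $ i) \<ge> 0" by simp
    have "norm lam * norm (v $ i) \<le> (\<Sum>j<n. ?H1 $$ (i,j) * norm (v $ j))"
      by (rule eig_ineq[OF H1 H10 v(1) v(3) i])
    also have "\<dots> \<le> (\<Sum>j<n. ?H2 $$ (i,j) * norm (v $ j))"
      using le12 i by (intro sum_mono mult_right_mono) auto
    finally show "norm lam * norm (v $ i) \<le> (\<Sum>j<n. ?H2 $$ (i,j) * norm (v $ j))" .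
  qed (use i0 in auto)
  thus "rho ?H1 \<le> rho ?H2" using sr by simp
qed

end
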